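(* Let $n\in\mathbb{N}$ and let $E$ be a symmetric function space on $(0,\infty)$. If $E^0\cap L_\infty\subset L_{n,1}$, then $E\cap L_\infty\subset L_{n,1}$.
   Context: A symmetric function space on $(0,\infty)$ is a Banach space $E$ of real-valued measurable functions such that whenever $y\in E$ and $x$ is measurable with $\mu(x)\le\mu(y)$ ($\mu$ = decreasing rearrangement of the absolute value), then $x\in E$ and $\|x\|_E\le\|y\|_E$. $E^0$ is the closure of $L_1\cap L_\infty$ in $E$. $L_{n,1}$ is the Lorentz space of measurable $f$ with $\|f\|_{L_{n,1}}=\int_0^\infty\mu(t;f)\,d(t^{1/n})<\infty$. *)

theory Defs
  imports "HOL-Analysis.Analysis"
begin

text \<open>Functions on (0,\<infinity>) are modelled as functions real \<Rightarrow> real; only their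
 values on {0<..} matter. The underlying measure space is Lebesgue measure on (0,\<infinity>).\<close>

abbreviation M0 :: "real measure" where
  "M0 \<equiv> restrict_space lebesgue {0<..}"

definition meas :: "(real \<Rightarrow> real) \<Rightarrow> bool" where
  "meas f \<longleftrightarrow> f \<in> borel_measurable M0"

text \<open>Decreasing rearrangement of |f|:
  mu(t;f) = inf { s \<ge> 0 : Leb{x>0. |f x| > s} \<le> t } (value \<infinity> if the set is empty).\<close>
definition drearr :: "real \<Rightarrow> (real \<Rightarrow> real) \<Rightarrow> ennreal" where
  "drearr t f = Inf {ennreal s | s. 0 \<le> s \<and>
       emeasure M0 {x \<in> {0<..}. s < \<bar>f x\<bar>} \<le> ennreal t}"

definition Linf :: "(real \<Rightarrow> real) set" where
  "Linf = {f. meas f \<and> (\<exists>C. AE x in M0. \<bar>f x\<bar> \<le> C)}"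

definition L1 :: "(real \<Rightarrow> real) set" where
  "L1 = {f. meas f \<and> integrable M0 f}"

text \<open>Lorentz space L_{n,1}: \<integral>_0^\<infinity> mu(t;f) d(t^(1/n)) < \<infinity>,
  with d(t^(1/n)) = (1/n) t^(1/n - 1) dt.\<close>
definition Lorentz_n1 :: "nat \<Rightarrow> (real \<Rightarrow> real) set" where
  "Lorentz_n1 n = {f. meas f \<and>
     (\<integral>\<^sup>+ t\<in>{0<..}. drearr t f * ennreal ((1 / real n) * t powr (1 / real n - 1)) \<partial>lborel) < \<infinity>}"

text \<open>A symmetric function space (E, N): a Banach space of measurable functions on
 (0,\<infinity>) (functions equal a.e. identified, i.e. N is a norm modulo null functions)
 with the symmetry property.\<close>
definition symmetric_function_space :: "(real \<Rightarrow> real) set \<Rightarrow> ((real \<Rightarrow> real) \<Rightarrow> real) \<Rightarrow> bool" where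
  "symmetric_function_space E N \<longleftrightarrow>
     (\<forall>x\<in>E. meas x) \<and>
     (\<lambda>_. 0) \<in> E \<and>
     (\<forall>x\<in>E. \<forall>y\<in>E. (\<lambda>s. x s + y s) \<in> E) \<and>
     (\<forall>x\<in>E. \<forall>c::real. (\<lambda>s. c * x s) \<in> E) \<and>
     (\<forall>x\<in>E. 0 \<le> N x) \<and>
     (\<forall>x\<in>E. N x = 0 \<longleftrightarrow> (AE s in M0. x s = 0)) \<and>
     (\<forall>x\<in>E. \<forall>y\<in>E. N (\<lambda>s. x s + y s) \<le> N x + N y) \<and>
     (\<forall>x\<in>E. \<forall>c::real. N (\<lambda>s. c * x s) = \<bar>c\<bar> * N x) \<and>
     (\<forall>X::nat \<Rightarrow> real \<Rightarrow> real. (\<forall>k. X k \<in> E) \<and>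
         (\<forall>e>0. \<exists>K. \<forall>k\<ge>K. \<forall>l\<ge>K. N (\<lambda>s. X k s - X l s) < e) \<longrightarrow>
         (\<exists>x\<in>E. (\<lambda>k. N (\<lambda>s. X k s - x s)) \<longlonglongrightarrow> 0)) \<and>
     (\<forall>y\<in>E. \<forall>x. meas x \<and> (\<forall>t>0. drearr t x \<le> drearr t y) \<longrightarrow> x \<in> E \<and> N x \<le> N y)"

definition E0 :: "(real \<Rightarrow> real) set \<Rightarrow> ((real \<Rightarrow> real) \<Rightarrow> real) \<Rightarrow> (real \<Rightarrow> real) set" where
  "E0 E N = {x \<in> E. \<forall>e>0. \<exists>y \<in> E \<inter> L1 \<inter> Linf. N (\<lambda>s. x s - y s) < e}"

end

theory Submission
  imports Defs
begin

lemma borel_meas: "(f::real\<Rightarrow>real) \<in> borel_measurable borel \<Longrightarrow> meas f"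
  unfolding meas_def
  by (rule measurable_restrict_space1) (use measurable_completion measurable_lborel2 in blast)

lemma antimono_borel:
  fixes f :: "real \<Rightarrow> real"
  assumes "\<And>a b. a \<le> b \<Longrightarrow> f b \<le> f a"
  shows "f \<in> borel_measurable borel"
proof -
  have "(\<lambda>t. - f t) \<in> borel_measurable borel"
    by (rule borel_measurable_mono) (auto simp: mono_def assms)
  then have "(\<lambda>t. - (- f t)) \<in> borel_measurable borel" by measurable
  then show ?thesis by simp
qed

lemma sets_M0_Ioc: "{0<..(b::real)} \<in> sets M0" by (subst sets_restrict_space_iff) auto
lemma sets_M0_Ioo: "{0<..<(b::real)} \<in> sets M0" by (subst sets_restrict_space_iff) auto

lemma emeasure_M0_Ioc: "0 \<le> b \<Longrightarrow> emeasure M0 {0<..(b::real)} = ennreal b"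
  by (subst emeasure_restrict_space) auto
lemma emeasure_M0_Ioo: "0 \<le> b \<Longrightarrow> emeasure M0 {0<..<(b::real)} = ennreal b"
  by (subst emeasure_restrict_space) auto

lemma meas_set: "meas f \<Longrightarrow> {x \<in> {0<..}. s < \<bar>f x\<bar>} \<in> sets M0"
proof -
  assume "meas f"
  then have [measurable]: "f \<in> borel_measurable M0" unfolding meas_def .
  have "{x \<in> space M0. s < \<bar>f x\<bar>} \<in> sets M0" by measurable
  then show ?thesis by simp
qed

lemma drearr_antimono: "t \<le> t' \<Longrightarrow> drearr t' f \<le> drearr t f"
  unfolding drearr_def
  by (rule Inf_superset_mono) (fastforce intro: order_trans[OF _ ennreal_leI])

lemma drearr_bound:
  assumes "meas f" "AE x in M0. \<bar>f x\<bar> \<le> C"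
  shows "drearr t f \<le> ennreal (max C 0)"
proof -
  have [measurable]: "f \<in> borel_measurable M0" using assms(1) unfolding meas_def .
  have "AE x in M0. \<bar>f x\<bar> \<le> max C 0" using assms(2) by eventually_elim auto
  moreover have "{x \<in> space M0. \<not> \<bar>f x\<bar> \<le> max C 0} \<in> sets M0" by measurable
  ultimately have "emeasure M0 {x \<in> space M0. \<not> \<bar>f x\<bar> \<le> max C 0} = 0"
    by (subst AE_iff_measurable[symmetric]) (auto)
  then have "emeasure M0 {x \<in> {0<..}. max C 0 < \<bar>f x\<bar>} \<le> ennreal t"
    by (simp add: not_le)
  then show ?thesis unfolding drearr_def
    by (intro Inf_lower) auto
qed

lemma drearr_dom:
  fixes x g m :: "real \<Rightarrow> real"
  assumes g: "meas g" and c: "c > 0" and t: "t > 0"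
    and dom: "\<And>\<tau>. \<tau> > 0 \<Longrightarrow> \<bar>g \<tau>\<bar> \<le> c * m \<tau>"
    and m: "\<And>\<tau>. drearr \<tau> x = ennreal (m \<tau>)"
  shows "drearr t g \<le> drearr t (\<lambda>s. c * x s)"
  unfolding drearr_def
proof (rule Inf_superset_mono, rule subsetI)
  fix a assume "a \<in> {ennreal s |s. 0 \<le> s \<and> emeasure M0 {xa \<in> {0<..}. s < \<bar>c * x xa\<bar>} \<le> ennreal t}"
  then obtain s where a: "a = ennreal s" and s: "0 \<le> s" "emeasure M0 {xa \<in> {0<..}. s < \<bar>c * x xa\<bar>} \<le> ennreal t"
    by blast
  have eq: "{xa \<in> {0<..}. s < \<bar>c * x xa\<bar>} = {xa \<in> {0<..}. s / c < \<bar>x xa\<bar>}"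
    using c by (auto simp: abs_mult field_simps)
  have mle: "m \<tau> \<le> s / c" if "\<tau> \<ge> t" for \<tau>
  proof -
    have "drearr \<tau> x \<le> ennreal (s / c)" unfolding drearr_def
      apply (rule Inf_lower)
      using s c that eq by (fastforce intro!: exI[of _ "s/c"] intro: order_trans[OF _ ennreal_leI])
    then show ?thesis using m[of \<tau>] s c by (simp add: ennreal_le_iff)
  qed
  have sub: "{xa \<in> {0<..}. s < \<bar>g xa\<bar>} \<subseteq> {0<..<t}"
  proof (rule subsetI)
    fix \<tau> :: real assume "\<tau> \<in> {xa \<in> {0<..}. s < \<bar>g xa\<bar>}"
    then have "\<tau> > 0" "s < \<bar>g \<tau>\<bar>" by auto
    have "\<tau> < t"
    proof (rule ccontr)
      assume "\<not> \<tau> < t"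
      then have "m \<tau> \<le> s / c" using mle by simp
      then have "c * m \<tau> \<le> s" using c by (simp add: field_simps)
      then show False using dom[of \<tau>] \<open>\<tau> > 0\<close> \<open>s < \<bar>g \<tau>\<bar>\<close> by simp
    qed
    then show "\<tau> \<in> {0<..<t}" using \<open>\<tau> > 0\<close> by simp
  qed
  have "emeasure M0 {xa \<in> {0<..}. s < \<bar>g xa\<bar>} \<le> emeasure M0 {0<..<t}"
    by (rule emeasure_mono[OF sub sets_M0_Ioo])
  also have "\<dots> = ennreal t" using t by (simp add: emeasure_M0_Ioo)
  finally have "emeasure M0 {xa \<in> {0<..}. s < \<bar>g xa\<bar>} \<le> ennreal t" .
  then show "a \<in> {ennreal s |s. 0 \<le> s \<and> emeasure M0 {xa \<in> {0<..}. s < \<bar>g xa\<bar>} \<le> ennreal t}"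
    using s a by auto
qed

lemma drearr_lower:
  fixes y :: "real \<Rightarrow> real"
  assumes y: "meas y" and anti: "\<And>a b. a \<le> b \<Longrightarrow> y b \<le> y a" and nn: "\<And>\<tau>. 0 \<le> y \<tau>"
    and t: "t > 0"
  shows "ennreal (y (2 * t)) \<le> drearr t y"
  unfolding drearr_def
proof (rule Inf_greatest, safe)
  fix s assume s: "0 \<le> s" "emeasure M0 {xa \<in> {0<..}. s < \<bar>y xa\<bar>} \<le> ennreal t"
  show "ennreal (y (2 * t)) \<le> ennreal s"
  proof (rule ccontr)
    assume "\<not> ?thesis"
    then have lt: "s < y (2 * t)" using s by (simp add: ennreal_le_iff not_le)
    have "{0<..2*t} \<subseteq> {xa \<in> {0<..}. s < \<bar>y xa\<bar>}"
    proof (rule subsetI)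
      fix \<tau> :: real assume "\<tau> \<in> {0<..2*t}"
      then have "0 < \<tau>" "\<tau> \<le> 2 * t" by auto
      then have "y (2 * t) \<le> y \<tau>" using anti by simp
      then show "\<tau> \<in> {xa \<in> {0<..}. s < \<bar>y xa\<bar>}" using lt nn[of \<tau>] \<open>0 < \<tau>\<close> by simp
    qed
    then have "emeasure M0 {0<..2*t} \<le> emeasure M0 {xa \<in> {0<..}. s < \<bar>y xa\<bar>}"
      by (rule emeasure_mono[OF _ meas_set[OF y]])
    moreover have "emeasure M0 {0<..2*t} = ennreal (2 * t)" using t by (simp add: emeasure_M0_Ioc)
    ultimately have "ennreal (2 * t) \<le> ennreal t" using s(2) by simp
    then show False using t by (simp add: ennreal_le_iff)
  qed
qed

lemma ennreal_all_nat_top: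
  assumes "\<And>j::nat. ennreal (real j) \<le> (X::ennreal)"
  shows "X = \<infinity>"
proof (rule ccontr)
  assume "X \<noteq> \<infinity>"
  then obtain r where r: "X = ennreal r" "0 \<le> r" by (cases X) auto
  obtain j :: nat where "r < real j" using reals_Archimedean2 by blast
  with assms[of j] r show False by (simp add: ennreal_le_iff)
qed

lemma w_exists:
  fixes f :: "real \<Rightarrow> ennreal"
  assumes fm[measurable]: "f \<in> borel_measurable borel"
    and inf: "(\<integral>\<^sup>+ t\<in>{0<..}. f t \<partial>lborel) = \<infinity>"
  shows "\<exists>w::real\<Rightarrow>real. (\<forall>a b. a \<le> b \<longrightarrow> w b \<le> w a) \<and> (\<forall>\<tau>. 0 < w \<tau> \<and> w \<tau> \<le> 1) \<and>
     (\<forall>\<epsilon>>0. \<exists>K>0. \<forall>\<tau>>K. w \<tau> \<le> \<epsilon>) \<and>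
     (\<integral>\<^sup>+ t\<in>{0<..}. f t * ennreal (w t) \<partial>lborel) = \<infinity>"
proof (cases "\<exists>T>0. (\<integral>\<^sup>+ t\<in>{0<..T}. f t \<partial>lborel) = \<infinity>")
  case True
  then obtain T where T: "T > 0" "(\<integral>\<^sup>+ t\<in>{0<..T}. f t \<partial>lborel) = \<infinity>" by blast
  define w where "w \<tau> = (if \<tau> \<le> T then 1 else T / \<tau>)" for \<tau> :: real
  have 1: "\<forall>a b. a \<le> b \<longrightarrow> w b \<le> w a"
    using T by (auto simp: w_def divide_left_mono)
  have 2: "\<forall>\<tau>. 0 < w \<tau> \<and> w \<tau> \<le> 1" using T by (auto simp: w_def)
  have 3: "\<forall>\<epsilon>>0. \<exists>K>0. \<forall>\<tau>>K. w \<tau> \<le> \<epsilon>"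
  proof (intro allI impI)
    fix \<epsilon> :: real assume e: "\<epsilon> > 0"
    show "\<exists>K>0. \<forall>\<tau>>K. w \<tau> \<le> \<epsilon>"
    proof (intro exI[of _ "max T (T / \<epsilon>)"] conjI allI impI)
      show "max T (T / \<epsilon>) > 0" using T by simp
      fix \<tau> assume "\<tau> > max T (T / \<epsilon>)"
      then have "\<tau> > T" "T / \<epsilon> < \<tau>" by auto
      then have "T < \<epsilon> * \<tau>" using e by (simp add: field_simps)
      then show "w \<tau> \<le> \<epsilon>" using \<open>\<tau> > T\<close> T by (simp add: w_def field_simps)
    qed
  qed
  have "(\<integral>\<^sup>+ t\<in>{0<..T}. f t \<partial>lborel) \<le> (\<integral>\<^sup>+ t\<in>{0<..}. f t * ennreal (w t) \<partial>lborel)"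
    by (rule nn_integral_mono) (auto simp: w_def split: split_indicator)
  then have 4: "(\<integral>\<^sup>+ t\<in>{0<..}. f t * ennreal (w t) \<partial>lborel) = \<infinity>" using T by (simp add: top_unique)
  show ?thesis using 1 2 3 4 by blast
next
  case False
  have step: "\<exists>S\<ge>T+1. ennreal c \<le> (\<integral>\<^sup>+ t\<in>{T<..S}. f t \<partial>lborel)" if T: "T \<ge> 1" for T c
  proof -
    have fin: "(\<integral>\<^sup>+ t\<in>{0<..T}. f t \<partial>lborel) \<noteq> \<infinity>" using False T by auto
    have "(\<integral>\<^sup>+ t\<in>{0<..}. f t \<partial>lborel) =
        (\<integral>\<^sup>+ t. f t * indicator {0<..T} t + f t * indicator {T<..} t \<partial>lborel)"
      using T by (intro nn_integral_cong) (auto split: split_indicator)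
    also have "\<dots> = (\<integral>\<^sup>+ t\<in>{0<..T}. f t \<partial>lborel) + (\<integral>\<^sup>+ t\<in>{T<..}. f t \<partial>lborel)"
      by (rule nn_integral_add) auto
    finally have eqn: "(\<integral>\<^sup>+ t\<in>{0<..}. f t \<partial>lborel) = (\<integral>\<^sup>+ t\<in>{0<..T}. f t \<partial>lborel) + (\<integral>\<^sup>+ t\<in>{T<..}. f t \<partial>lborel)" .
    have "(\<integral>\<^sup>+ t\<in>{0<..T}. f t \<partial>lborel) + (\<integral>\<^sup>+ t\<in>{T<..}. f t \<partial>lborel) = \<infinity>"
      using eqn inf by (rule subst)
    then have tail: "(\<integral>\<^sup>+ t\<in>{T<..}. f t \<partial>lborel) = \<infinity>" using fin
      by (simp add: ennreal_add_eq_top)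
    define g where "g k t = f t * indicator {T<..T + 1 + real k} t" for k :: nat and t
    have inc: "incseq g"
      by (auto simp: incseq_def le_fun_def g_def split: split_indicator intro: mult_left_mono)
    have sup: "(SUP k. g k t) = f t * indicator {T<..} t" for t
    proof (cases "T < t")
      case True
      obtain k :: nat where "t - T \<le> real k" using real_arch_simple by blast
      then have "g k t = f t * indicator {T<..} t" using True by (simp add: g_def)
      moreover have "g i t \<le> f t * indicator {T<..} t" for i
        by (auto simp: g_def split: split_indicator)
      ultimately show ?thesis by (intro antisym SUP_least) (auto intro: SUP_upper2[of k])
    next
      case False then show ?thesis by (simp add: g_def)
    qed
    have "(SUP k. integral\<^sup>N lborel (g k)) = (\<integral>\<^sup>+ t. (SUP k. g k t) \<partial>lborel)"
    proof (rule nn_integral_monotone_convergence_SUP[symmetric, OF inc])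
      fix k
      have eq: "g k = (\<lambda>t. f t * indicator {T<..T + 1 + real k} t)" by (rule ext) (simp add: g_def)
      show "g k \<in> borel_measurable lborel" apply (subst eq) by measurable
    qed
    also have "\<dots> = \<infinity>" using tail by (simp add: sup)
    finally have S: "(SUP k. integral\<^sup>N lborel (g k)) = \<infinity>" .
    have "ennreal c < (SUP k. integral\<^sup>N lborel (g k))" unfolding S by simp
    then obtain k where "ennreal c < integral\<^sup>N lborel (g k)" unfolding less_SUP_iff by blast
    moreover have "g k = (\<lambda>t. f t * indicator {T<..T + 1 + real k} t)" by (rule ext) (simp add: g_def)
    ultimately have "ennreal c \<le> (\<integral>\<^sup>+ t\<in>{T<..T + 1 + real k}. f t \<partial>lborel)" by simp
    then show ?thesis
      by (intro exI[of _ "T + 1 + real k"]) simp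
  qed
  define nxt where "nxt j T = (SOME S. S \<ge> T + 1 \<and>
      ennreal ((real j + 1)^2) \<le> (\<integral>\<^sup>+ t\<in>{T<..S}. f t \<partial>lborel))" for j :: nat and T
  have nxt: "nxt j T \<ge> T + 1 \<and>
      ennreal ((real j + 1)^2) \<le> (\<integral>\<^sup>+ t\<in>{T<..nxt j T}. f t \<partial>lborel)" if "T \<ge> 1" for j T
    unfolding nxt_def by (rule someI_ex) (use step[OF that, of "(real j + 1)^2"] in blast)
  define T where "T = rec_nat (1::real) (\<lambda>j t. nxt j t)"
  have T0: "T 0 = 1" and TS: "T (Suc j) = nxt j (T j)" for j by (simp_all add: T_def)
  have Tge: "T j \<ge> real j + 1" for j
  proof (induction j)
    case 0 then show ?case by (simp add: T0)
  next
    case (Suc j)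
    then have "T j \<ge> 1" by simp
    then have "nxt j (T j) \<ge> T j + 1" using nxt by blast
    then show ?case using Suc by (simp add: TS)
  qed
  have T1: "T j \<ge> 1" for j using Tge[of j] by simp
  have Tstep: "T (Suc j) \<ge> T j + 1" for j using nxt[OF T1[of j]] by (simp add: TS)
  have Tint: "ennreal ((real j + 1)^2) \<le> (\<integral>\<^sup>+ t\<in>{T j<..T (Suc j)}. f t \<partial>lborel)" for j
    using nxt[OF T1[of j]] by (simp add: TS)
  have Tsuc: "T n \<le> T (Suc n)" for n using Tstep[of n] by linarith
  have Tmono: "T i \<le> T j" if "i \<le> j" for i j
    using lift_Suc_mono_le[of T, OF Tsuc that] .
  define J where "J \<tau> = (LEAST j. \<tau> \<le> T (Suc j))" for \<tau>
  have Jex: "\<exists>j. \<tau> \<le> T (Suc j)" for \<tau>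
  proof -
    obtain j :: nat where "\<tau> \<le> real j" using real_arch_simple by blast
    then show ?thesis using Tge[of "Suc j"] by (intro exI[of _ j]) simp
  qed
  have JI: "\<tau> \<le> T (Suc (J \<tau>))" for \<tau> unfolding J_def by (rule LeastI_ex[OF Jex])
  have Jle: "\<tau> \<le> T (Suc j) \<Longrightarrow> J \<tau> \<le> j" for \<tau> j unfolding J_def by (rule Least_le)
  have Jge: "T j < \<tau> \<Longrightarrow> j \<le> J \<tau>" for \<tau> j
  proof (rule ccontr)
    assume "T j < \<tau>" "\<not> j \<le> J \<tau>"
    then have "T (Suc (J \<tau>)) \<le> T j" by (intro Tmono) simp
    then show False using JI[of \<tau>] \<open>T j < \<tau>\<close> by simp
  qed
  define w where "w \<tau> = 1 / (real (J \<tau>) + 1)" for \<tau>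
  have 1: "\<forall>a b. a \<le> b \<longrightarrow> w b \<le> w a"
  proof (intro allI impI)
    fix a b :: real assume "a \<le> b"
    then have "J a \<le> J b" using JI[of b] by (intro Jle) simp
    then show "w b \<le> w a" by (simp add: w_def frac_le)
  qed
  have 2: "\<forall>\<tau>. 0 < w \<tau> \<and> w \<tau> \<le> 1" by (simp add: w_def)
  have 3: "\<forall>\<epsilon>>0. \<exists>K>0. \<forall>\<tau>>K. w \<tau> \<le> \<epsilon>"
  proof (intro allI impI)
    fix \<epsilon> :: real assume e: "\<epsilon> > 0"
    obtain j :: nat where j: "inverse (real (Suc j)) < \<epsilon>"
      using reals_Archimedean[OF e] by blast
    show "\<exists>K>0. \<forall>\<tau>>K. w \<tau> \<le> \<epsilon>"
    proof (intro exI[of _ "T j"] conjI allI impI)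
      show "T j > 0" using T1[of j] by simp
      fix \<tau> assume "\<tau> > T j"
      then have "j \<le> J \<tau>" by (rule Jge)
      then have "w \<tau> \<le> 1 / (real j + 1)" by (simp add: w_def frac_le)
      also have "\<dots> < \<epsilon>" using j by (simp add: field_simps)
      finally show "w \<tau> \<le> \<epsilon>" by simp
    qed
  qed
  have low: "ennreal (real j) \<le> (\<integral>\<^sup>+ t\<in>{0<..}. f t * ennreal (w t) \<partial>lborel)" for j
  proof -
    have "ennreal (real j) \<le> ennreal (1 / (real j + 1)) * ennreal ((real j + 1)^2)"
      by (simp add: ennreal_mult''[symmetric] power2_eq_square)
    also have "\<dots> \<le> ennreal (1 / (real j + 1)) * (\<integral>\<^sup>+ t\<in>{T j<..T (Suc j)}. f t \<partial>lborel)"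
      by (rule mult_left_mono[OF Tint]) simp
    also have "\<dots> = (\<integral>\<^sup>+ t. ennreal (1 / (real j + 1)) * (f t * indicator {T j<..T (Suc j)} t) \<partial>lborel)"
      by (rule nn_integral_cmult[symmetric]) simp
    also have "\<dots> \<le> (\<integral>\<^sup>+ t\<in>{0<..}. f t * ennreal (w t) \<partial>lborel)"
    proof (rule nn_integral_mono)
      fix t
      show "ennreal (1 / (real j + 1)) * (f t * indicator {T j<..T (Suc j)} t) \<le> f t * ennreal (w t) * indicator {0<..} t"
      proof (cases "t \<in> {T j<..T (Suc j)}")
        case True
        then have "J t = j" using Jle[of t j] Jge[of j t] by auto
        moreover have "t > 0" using True T1[of j] by auto
        ultimately show ?thesis using True by (simp add: w_def mult.commute)
      qed simp
    qed
    finally show ?thesis .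
  qed
  have 4: "(\<integral>\<^sup>+ t\<in>{0<..}. f t * ennreal (w t) \<partial>lborel) = \<infinity>"
    by (rule ennreal_all_nat_top[OF low])
  show ?thesis using 1 2 3 4 by blast
qed


theorem lemma5p8:
  fixes n :: nat and E :: "(real \<Rightarrow> real) set" and N :: "(real \<Rightarrow> real) \<Rightarrow> real"
  assumes "1 \<le> n"
    and "symmetric_function_space E N"
    and "E0 E N \<inter> Linf \<subseteq> Lorentz_n1 n"
  shows "E \<inter> Linf \<subseteq> Lorentz_n1 n"
proof (rule subsetI)
  fix x assume xin: "x \<in> E \<inter> Linf"
  have sym: "\<And>y z. y \<in> E \<Longrightarrow> meas z \<Longrightarrow> (\<forall>t>0. drearr t z \<le> drearr t y) \<Longrightarrow> z \<in> E \<and> N z \<le> N y"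
    using assms(2) unfolding symmetric_function_space_def by blast
  have smul: "\<And>z c. z \<in> E \<Longrightarrow> (\<lambda>s. c * z s) \<in> E"
    using assms(2) unfolding symmetric_function_space_def by blast
  have Nsmul: "\<And>z c. z \<in> E \<Longrightarrow> N (\<lambda>s. c * z s) = \<bar>c\<bar> * N z"
    using assms(2) unfolding symmetric_function_space_def by blast
  have Nnn: "\<And>z. z \<in> E \<Longrightarrow> 0 \<le> N z"
    using assms(2) unfolding symmetric_function_space_def by blast
  show "x \<in> Lorentz_n1 n"
  proof (rule ccontr)
    assume notin: "x \<notin> Lorentz_n1 n"
    from xin have xE: "x \<in> E" and xm: "meas x" and "\<exists>C. AE s in M0. \<bar>x s\<bar> \<le> C"
      by (auto simp: Linf_def)
    then obtain C where C: "AE s in M0. \<bar>x s\<bar> \<le> C" by blast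
    define B where "B = max C 0"
    have B0: "0 \<le> B" by (simp add: B_def)
    have dbound: "drearr t x \<le> ennreal B" for t using drearr_bound[OF xm C] by (simp add: B_def)
    define m where "m = (\<lambda>t. enn2real (drearr t x))"
    have dm: "drearr t x = ennreal (m t)" for t
    proof -
      have "drearr t x < top" using dbound[of t] by (simp add: le_less_trans)
      then show ?thesis by (simp add: m_def)
    qed
    have m0: "0 \<le> m t" for t by (simp add: m_def)
    have mB: "m t \<le> B" for t using dbound[of t] B0 by (simp add: dm ennreal_le_iff)
    have manti: "m b \<le> m a" if "a \<le> b" for a b
      using drearr_antimono[OF that, of x] m0[of a] by (simp add: dm ennreal_le_iff)
    define \<phi> where "\<phi> = (\<lambda>t::real. (1 / real n) * t powr (1 / real n - 1))"
    have \<phi>m[measurable]: "\<phi> \<in> borel_measurable borel" unfolding \<phi>_def by measurable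
    have mm[measurable]: "m \<in> borel_measurable borel" by (rule antimono_borel) (rule manti)
    have infx: "(\<integral>\<^sup>+ t\<in>{0<..}. ennreal (m t) * ennreal (\<phi> t) \<partial>lborel) = \<infinity>"
      using notin xm by (simp add: Lorentz_n1_def dm \<phi>_def) (metis less_top)
    obtain w :: "real \<Rightarrow> real" where w1: "\<And>a b. a \<le> b \<Longrightarrow> w b \<le> w a"
      and w2: "\<And>\<tau>. 0 < w \<tau> \<and> w \<tau> \<le> 1" and w3: "\<And>\<epsilon>. \<epsilon> > 0 \<Longrightarrow> \<exists>K>0. \<forall>\<tau>>K. w \<tau> \<le> \<epsilon>"
      and w4: "(\<integral>\<^sup>+ t\<in>{0<..}. ennreal (m t) * ennreal (\<phi> t) * ennreal (w t) \<partial>lborel) = \<infinity>"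
      using w_exists[of "\<lambda>t. ennreal (m t) * ennreal (\<phi> t)", OF _ infx] by (auto simp del: ennreal_mult_eq_top_iff) measurable
    define y where "y = (\<lambda>s. m s * w s)"
    have y0: "0 \<le> y s" for s using m0[of s] w2[of s] by (simp add: y_def)
    have yanti: "y b \<le> y a" if "a \<le> b" for a b
      unfolding y_def by (rule mult_mono) (use manti[OF that] w1[OF that] m0 w2 in \<open>auto simp: less_imp_le\<close>)
    have yle: "y s \<le> m s" for s
      using m0[of s] w2[of s] by (simp add: y_def mult_left_le)
    have yb[measurable]: "y \<in> borel_measurable borel" by (rule antimono_borel) (rule yanti)
    have ym: "meas y" by (rule borel_meas[OF yb])
    have Nx: "0 \<le> N x" by (rule Nnn[OF xE])
    have yE: "y \<in> E"
    proof -
      have "\<forall>t>0. drearr t y \<le> drearr t x"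
        using drearr_dom[OF ym, of 1 _ m x] yle y0 dm by auto
      then show ?thesis using sym[OF xE ym] by blast
    qed
    have yLinf: "y \<in> Linf"
      unfolding Linf_def using ym yle y0 mB by (auto intro!: exI[of _ B] order_trans[OF _ mB])
    have yE0: "y \<in> E0 E N"
      unfolding E0_def
    proof (intro CollectI conjI yE allI impI)
      fix e :: real assume e: "e > 0"
      define \<epsilon> where "\<epsilon> = e / (N x + 1)"
      have \<epsilon>0: "\<epsilon> > 0" using e Nx by (simp add: \<epsilon>_def)
      have \<epsilon>N: "\<epsilon> * N x < e" using e Nx by (simp add: \<epsilon>_def field_simps)
      obtain K where K: "K > 0" "\<And>\<tau>. \<tau> > K \<Longrightarrow> w \<tau> \<le> \<epsilon>" using w3[OF \<epsilon>0] by blast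
      define z where "z = (\<lambda>s. if s \<le> K then y s else 0)"
      have zb[measurable]: "z \<in> borel_measurable borel" unfolding z_def by measurable
      have zm: "meas z" by (rule borel_meas[OF zb])
      have zabs: "\<bar>z s\<bar> \<le> m s" for s using yle[of s] y0[of s] m0[of s] by (simp add: z_def)
      have zE: "z \<in> E"
      proof -
        have "\<forall>t>0. drearr t z \<le> drearr t x"
          using drearr_dom[OF zm, of 1 _ m x] zabs dm by auto
        then show ?thesis using sym[OF xE zm] by blast
      qed
      have zLinf: "z \<in> Linf"
        unfolding Linf_def using zm zabs mB by (auto intro!: exI[of _ B] order_trans[OF _ mB])
      have zL1: "z \<in> L1"
        unfolding L1_def
      proof (intro CollectI conjI zm integrableI_bounded)
        show "z \<in> borel_measurable M0" using zm by (simp add: meas_def)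
        have "(\<integral>\<^sup>+ s. ennreal (norm (z s)) \<partial>M0) \<le> (\<integral>\<^sup>+ s. ennreal B * indicator {0<..K} s \<partial>M0)"
        proof (rule nn_integral_mono)
          fix s assume "s \<in> space M0"
          then have "s > 0" by simp
          show "ennreal (norm (z s)) \<le> ennreal B * indicator {0<..K} s"
            using zabs[of s] mB[of s] \<open>s > 0\<close> by (auto simp: z_def split: split_indicator)
        qed
        also have "\<dots> = ennreal B * emeasure M0 {0<..K}"
          by (rule nn_integral_cmult_indicator[OF sets_M0_Ioc])
        also have "\<dots> = ennreal B * ennreal K" using K by (simp add: emeasure_M0_Ioc)
        also have "\<dots> < \<infinity>" by (simp add: ennreal_mult_less_top)
        finally show "(\<integral>\<^sup>+ s. ennreal (norm (z s)) \<partial>M0) < \<infinity>" .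
      qed
      define g where "g = (\<lambda>s. y s - z s)"
      have gb[measurable]: "g \<in> borel_measurable borel" unfolding g_def by measurable
      have gm: "meas g" by (rule borel_meas[OF gb])
      have gdom: "\<bar>g \<tau>\<bar> \<le> \<epsilon> * m \<tau>" if "\<tau> > 0" for \<tau>
      proof (cases "\<tau> \<le> K")
        case True then show ?thesis using \<epsilon>0 m0[of \<tau>] by (simp add: g_def z_def)
      next
        case False
        then have "w \<tau> \<le> \<epsilon>" using K by simp
        then have "m \<tau> * w \<tau> \<le> m \<tau> * \<epsilon>" using m0[of \<tau>] by (rule mult_left_mono)
        then show ?thesis using False y0[of \<tau>] by (simp add: g_def z_def y_def mult.commute)
      qed
      have xeE: "(\<lambda>s. \<epsilon> * x s) \<in> E" by (rule smul[OF xE])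
      have "\<forall>t>0. drearr t g \<le> drearr t (\<lambda>s. \<epsilon> * x s)"
        using drearr_dom[OF gm \<epsilon>0 _ gdom dm] by blast
      then have "N g \<le> N (\<lambda>s. \<epsilon> * x s)" using sym[OF xeE gm] by blast
      also have "\<dots> = \<epsilon> * N x" using Nsmul[OF xE] \<epsilon>0 by simp
      finally have "N g < e" using \<epsilon>N by simp
      then show "\<exists>z\<in>E \<inter> L1 \<inter> Linf. N (\<lambda>s. y s - z s) < e"
        using zE zL1 zLinf unfolding g_def by blast
    qed
    have "y \<in> Lorentz_n1 n" using assms(3) yE0 yLinf by blast
    then have fin: "(\<integral>\<^sup>+ t\<in>{0<..}. drearr t y * ennreal (\<phi> t) \<partial>lborel) < \<infinity>"
      by (simp add: Lorentz_n1_def \<phi>_def)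
    define h where "h = (\<lambda>u. ennreal (y u) * ennreal (\<phi> u) * indicator {0<..} u)"
    have hm[measurable]: "h \<in> borel_measurable borel" unfolding h_def by measurable
    have hinf: "integral\<^sup>N lborel h = \<infinity>"
    proof -
      have "integral\<^sup>N lborel h = (\<integral>\<^sup>+ t\<in>{0<..}. ennreal (m t) * ennreal (\<phi> t) * ennreal (w t) \<partial>lborel)"
        unfolding h_def y_def
        by (intro nn_integral_cong) (simp add: ennreal_mult m0 w2 less_imp_le mult_ac)
      then show ?thesis using w4 by simp
    qed
    have "integral\<^sup>N lborel h = ennreal \<bar>2\<bar> * (\<integral>\<^sup>+ t. h (0 + 2 * t) \<partial>lborel)"
      by (rule nn_integral_real_affine[OF hm]) simp
    then have "2 * (\<integral>\<^sup>+ t. h (2 * t) \<partial>lborel) = \<infinity>" using hinf by simp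
    then have h2: "(\<integral>\<^sup>+ t. h (2 * t) \<partial>lborel) = \<infinity>"
      using ennreal_mult_eq_top_iff[of 2 "\<integral>\<^sup>+ t. h (2 * t) \<partial>lborel"] by simp
    have "(\<integral>\<^sup>+ t. h (2 * t) \<partial>lborel) \<le> (\<integral>\<^sup>+ t\<in>{0<..}. drearr t y * ennreal (\<phi> t) \<partial>lborel)"
    proof (rule nn_integral_mono)
      fix t :: real
      show "h (2 * t) \<le> drearr t y * ennreal (\<phi> t) * indicator {0<..} t"
      proof (cases "t > 0")
        case True
        have p: "\<phi> (2 * t) \<le> \<phi> t"
          unfolding \<phi>_def using True assms(1)
          by (intro mult_left_mono powr_mono2') (auto simp: field_simps)
        have "h (2 * t) = ennreal (y (2 * t)) * ennreal (\<phi> (2 * t))" using True by (simp add: h_def)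
        also have "\<dots> \<le> drearr t y * ennreal (\<phi> t)"
          by (intro mult_mono drearr_lower[OF ym yanti y0 True] ennreal_leI p) auto
        finally show ?thesis using True by simp
      qed (simp add: h_def)
    qed
    then show False using fin h2 by simp
  qed
qed

end
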